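(* Let $E:[0,\infty)\times\mathbb{R}^2\to\mathbb{R}^2$ and $b:[0,\infty)\times\mathbb{R}^2\to\mathbb{R}$ be continuous with $b$ nowhere vanishing, $B=b\,e_3$, and let $\gamma=1-1/\sqrt2$. Fix $\Delta t>0$, $T>0$, $t^n=n\Delta t$, $N_T=\lfloor T/\Delta t\rfloor$. For each $\varepsilon>0$ let $(x^n_\varepsilon,v^n_\varepsilon)_{0\le n\le N_T}$ be generated (dropping the index $\varepsilon$ inside stages) by: given $(x^n,v^n)$, $$x^{(1)}=x^n+\frac{\gamma\Delta t}{\varepsilon}v^{(1)},\quad v^{(1)}=v^n+\frac{\gamma\Delta t}{\varepsilon}F^{(1)},\quad F^{(1)}=\frac{v^{(1)}}{\varepsilon}\wedge B(t^n,x^n)+E(t^n,x^n);$$ with $\hat t^{(1)}=t^n+\frac{\Delta t}{2\gamma}$ and $\hat x^{(1)}=x^n+\frac{\Delta t}{2\gamma\varepsilon}v^{(1)}$, $$x^{(2)}=x^n+\frac{(1-\gamma)\Delta t}{\varepsilon}v^{(1)}+\frac{\gamma\Delta t}{\varepsilon}v^{(2)},\quad v^{(2)}=v^n+\frac{(1-\gamma)\Delta t}{\varepsilon}F^{(1)}+\frac{\gamma\Delta t}{\varepsilon}F^{(2)},$$ $$F^{(2)}=\frac{v^{(2)}}{\varepsilon}\wedge B(\hat t^{(1)},\hat x^{(1)})+E(\hat t^{(1)},\hat x^{(1)}),$$ and $x^{n+1}=x^{(2)}$, $v^{n+1}=v^{(2)}$. Assume that for every $1\le n\le N_T$ the family $(x^n_\varepsilon,\varepsilon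 v^n_\varepsilon)_{\varepsilon>0}$ is bounded uniformly in $\varepsilon$ and that $(x^0_\varepsilon,\varepsilon v^0_\varepsilon)\to(y^0,0)$ as $\varepsilon\to0$. Then for every $0\le n\le N_T$, $x^n_\varepsilon\to y^n$ as $\varepsilon\to0$, where $(y^n)$ starts from $y^0$ and satisfies $$U^n=U(t^n,y^n),\quad \hat y^{(1)}=y^n+\frac{\Delta t}{2\gamma}U^n,\quad U^{(1)}=U(\hat t^{(1)},\hat y^{(1)}),\quad y^{n+1}=y^n+(1-\gamma)\Delta t\,U^n+\gamma\Delta t\,U^{(1)}.$$
   Context: Vectors of $\mathbb{R}^2$ are identified with vectors $(w_1,w_2,0)$ of $\mathbb{R}^3$, $e_3=(0,0,1)$, and $\wedge$ is the cross product; thus for $w\in\mathbb{R}^2$ and $B=b\,e_3$, $w\wedge B=b\,(w_2,-w_1)\in\mathbb{R}^2$. The guiding-center drift is $U(t,x)=\dfrac{E(t,x)\wedge B(t,x)}{\|B(t,x)\|^2}$. *)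

theory Defs
  imports "HOL-Analysis.Analysis"
begin

text \<open>Vectors of R^2 are modelled as pairs (w1, w2). The cross product
 w \<and> (b e3) = b (w2, -w1).\<close>
definition wedge :: "real \<times> real \<Rightarrow> real \<Rightarrow> real \<times> real" where
  "wedge w b = (b * snd w, - (b * fst w))"

definition gam :: real where
  "gam = 1 - 1 / sqrt 2"

definition drift ::
  "(real \<Rightarrow> real \<times> real \<Rightarrow> real \<times> real) \<Rightarrow> (real \<Rightarrow> real \<times> real \<Rightarrow> real)
     \<Rightarrow> real \<Rightarrow> real \<times> real \<Rightarrow> real \<times> real" where
  "drift E b t x = (1 / (b t x)^2) *\<^sub>R wedge (E t x) (b t x)"

text \<open>One step of the (implicit) two-stage scheme, from (x^n,v^n) at time tn
 to (x^{n+1},v^{n+1}); the stage quantities are existentially quantified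
 (they are uniquely determined by the implicit linear equations).\<close>
definition scheme_step ::
  "(real \<Rightarrow> real \<times> real \<Rightarrow> real \<times> real) \<Rightarrow> (real \<Rightarrow> real \<times> real \<Rightarrow> real)
    \<Rightarrow> real \<Rightarrow> real \<Rightarrow> real \<Rightarrow> real \<times> real \<Rightarrow> real \<times> real
    \<Rightarrow> real \<times> real \<Rightarrow> real \<times> real \<Rightarrow> bool" where
  "scheme_step E b eps dt tn xn vn xn1 vn1 \<longleftrightarrow>
     (\<exists>x1 v1 F1 x2 v2 F2.
        x1 = xn + (gam * dt / eps) *\<^sub>R v1 \<and>
        v1 = vn + (gam * dt / eps) *\<^sub>R F1 \<and>
        F1 = (1 / eps) *\<^sub>R wedge v1 (b tn xn) + E tn xn \<and>
        (let th = tn + dt / (2 * gam);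
             xh = xn + (dt / (2 * gam * eps)) *\<^sub>R v1 in
          x2 = xn + ((1 - gam) * dt / eps) *\<^sub>R v1 + (gam * dt / eps) *\<^sub>R v2 \<and>
          v2 = vn + ((1 - gam) * dt / eps) *\<^sub>R F1 + (gam * dt / eps) *\<^sub>R F2 \<and>
          F2 = (1 / eps) *\<^sub>R wedge v2 (b th xh) + E th xh) \<and>
        xn1 = x2 \<and> vn1 = v2)"

primrec ylim ::
  "(real \<Rightarrow> real \<times> real \<Rightarrow> real \<times> real) \<Rightarrow> (real \<Rightarrow> real \<times> real \<Rightarrow> real)
    \<Rightarrow> real \<Rightarrow> real \<times> real \<Rightarrow> nat \<Rightarrow> real \<times> real" where
  "ylim E b dt y0 0 = y0"
| "ylim E b dt y0 (Suc n) =
     (let tn = real n * dt; yn = ylim E b dt y0 n;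
          Uyn = drift E b tn yn;
          th = tn + dt / (2 * gam);
          yh = yn + (dt / (2 * gam)) *\<^sub>R Uyn;
          U1 = drift E b th yh
      in yn + ((1 - gam) * dt) *\<^sub>R Uyn + (gam * dt) *\<^sub>R U1)"

end

theory Submission
  imports Defs
begin

lemma wedge_lower: "\<bar>beta\<bar> * norm z \<le> norm (alpha *\<^sub>R z + wedge z beta)"
proof -
  obtain z1 z2 where z: "z = (z1, z2)" by (cases z)
  have n1: "(norm z)\<^sup>2 = z1\<^sup>2 + z2\<^sup>2" by (simp add: z norm_Pair)
  have n2: "(norm (alpha *\<^sub>R z + wedge z beta))\<^sup>2 = (alpha*z1 + beta*z2)\<^sup>2 + (alpha*z2 - beta*z1)\<^sup>2"
    by (simp add: z wedge_def norm_Pair)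
  have n3: "(alpha*z1 + beta*z2)\<^sup>2 + (alpha*z2 - beta*z1)\<^sup>2 = alpha\<^sup>2 * (z1\<^sup>2 + z2\<^sup>2) + beta\<^sup>2 * (z1\<^sup>2 + z2\<^sup>2)"
    by (simp add: power2_eq_square algebra_simps)
  have n4: "0 \<le> alpha\<^sup>2 * (z1\<^sup>2 + z2\<^sup>2)" by simp
  have sq: "(\<bar>beta\<bar> * norm z)\<^sup>2 \<le> (norm (alpha *\<^sub>R z + wedge z beta))\<^sup>2"
    unfolding n2 n3 power_mult_distrib n1 using n4 by simp
  show ?thesis by (rule power2_le_imp_le[OF sq]) simp
qed

lemma wedge_scale: "wedge w (a * B) = a *\<^sub>R wedge w B"
  by (simp add: wedge_def)
lemma wedge_add: "wedge (u + w) B = wedge u B + wedge w B"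
  by (simp add: wedge_def algebra_simps)
lemma wedge_scaleR: "wedge (c *\<^sub>R u) B = c *\<^sub>R wedge u B"
  by (simp add: wedge_def algebra_simps)
lemma wedge_zero[simp]: "wedge 0 B = 0"
  by (simp add: wedge_def zero_prod_def)

lemma tendsto_wedge[tendsto_intros]:
  "(f \<longlongrightarrow> w) F \<Longrightarrow> (g \<longlongrightarrow> c) F \<Longrightarrow> ((\<lambda>e. wedge (f e) (g e)) \<longlongrightarrow> wedge w c) F"
  unfolding wedge_def by (intro tendsto_intros)

lemma gam_pos: "gam > 0"
proof -
  have "sqrt 2 > 1" by simp
  then have "1 / sqrt 2 < 1" by simp
  then show ?thesis by (simp add: gam_def)
qed

lemma solve0:
  assumes r: "(r \<longlongrightarrow> 0) F" and B: "(B \<longlongrightarrow> beta) F" and nz: "beta \<noteq> 0" and a: "a > 0"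
    and eq: "eventually (\<lambda>e. a *\<^sub>R wedge (d e) (B e) - (c e) *\<^sub>R d e = r e) F"
  shows "(d \<longlongrightarrow> 0) F"
proof (rule Lim_null_comparison)
  have ne: "eventually (\<lambda>e. B e \<noteq> 0) F" using tendsto_imp_eventually_ne[OF B nz] .
  show "eventually (\<lambda>e. norm (d e) \<le> norm (r e) / (a * \<bar>B e\<bar>)) F"
    using ne eq
  proof eventually_elim
    case (elim e)
    have "\<bar>a * B e\<bar> * norm (d e) \<le> norm ((- c e) *\<^sub>R d e + wedge (d e) (a * B e))"
      by (rule wedge_lower)
    also have "(- c e) *\<^sub>R d e + wedge (d e) (a * B e) = r e"
      using elim(2) by (simp add: wedge_scale algebra_simps)
    finally have "(a * \<bar>B e\<bar>) * norm (d e) \<le> norm (r e)" using a by (simp add: abs_mult)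
    moreover have "a * \<bar>B e\<bar> > 0" using a elim(1) by simp
    ultimately show ?case by (simp add: field_simps)
  qed
  have "((\<lambda>e. norm (r e) / (a * \<bar>B e\<bar>)) \<longlongrightarrow> norm (0::real\<times>real) / (a * \<bar>beta\<bar>)) F"
    by (intro tendsto_intros r B) (use a nz in simp)
  then show "((\<lambda>e. norm (r e) / (a * \<bar>B e\<bar>)) \<longlongrightarrow> 0) F" by simp
qed

lemma cont_lim:
  assumes c: "continuous_on ({0..} \<times> UNIV) (\<lambda>(t, z). f t z)" and t: "t \<ge> (0::real)"
    and x: "(xe \<longlongrightarrow> y) F"
  shows "((\<lambda>e. f t (xe e)) \<longlongrightarrow> f t y) F"
proof -
  have "((\<lambda>e. (\<lambda>(t, z). f t z) (t, xe e)) \<longlongrightarrow> (\<lambda>(t, z). f t z) (t, y)) F"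
    by (rule continuous_on_tendsto_compose[OF c]) (use t in \<open>auto intro!: tendsto_intros x\<close>)
  then show ?thesis by simp
qed

lemma drift_lim:
  assumes contE: "continuous_on ({0..} \<times> UNIV) (\<lambda>(t, z). E t z)"
    and contb: "continuous_on ({0..} \<times> UNIV) (\<lambda>(t, z). b t z)"
    and t: "t \<ge> 0" and nz: "b t y \<noteq> 0" and x: "(xe \<longlongrightarrow> y) F"
  shows "((\<lambda>e. drift E b t (xe e)) \<longlongrightarrow> drift E b t y) F"
  unfolding drift_def
  by (intro tendsto_intros cont_lim[OF contE t x] cont_lim[OF contb t x]) (use nz in simp)



lemma wedge_drift: "B \<noteq> 0 \<Longrightarrow> wedge ((1 / B\<^sup>2) *\<^sub>R wedge E B) B = - E"
  by (cases E) (simp add: wedge_def power2_eq_square)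

lemma A1:
  assumes e: "e > (0::real)" and B: "B \<noteq> 0"
    and v1: "v1 = vn + (a / e) *\<^sub>R ((1 / e) *\<^sub>R wedge v1 B + E)"
  shows "a *\<^sub>R wedge ((1/e) *\<^sub>R v1 - (1 / B\<^sup>2) *\<^sub>R wedge E B) B - (e\<^sup>2) *\<^sub>R ((1/e) *\<^sub>R v1 - (1 / B\<^sup>2) *\<^sub>R wedge E B)
     = e\<^sup>2 *\<^sub>R ((1 / B\<^sup>2) *\<^sub>R wedge E B) - e *\<^sub>R vn"
proof -
  define U where "U = (1 / B\<^sup>2) *\<^sub>R wedge E B"
  define u where "u = (1/e) *\<^sub>R v1"
  have vu: "v1 = e *\<^sub>R u" using e by (simp add: u_def)
  have wU: "wedge U B = - E" using B by (simp add: U_def wedge_drift)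
  have wd: "wedge (u - U) B = wedge u B + E"
    using wedge_add[of u "-U" B] wedge_scaleR[of "-1" U B] wU by simp
  have "e *\<^sub>R v1 = e *\<^sub>R (vn + (a / e) *\<^sub>R ((1 / e) *\<^sub>R wedge v1 B + E))"
    using v1 by simp
  also have "\<dots> = e *\<^sub>R vn + a *\<^sub>R (wedge u B + E)"
  proof -
    have ea: "\<And>X. e *\<^sub>R ((a / e) *\<^sub>R X) = a *\<^sub>R (X::real\<times>real)" using e by simp
    show ?thesis by (simp only: scaleR_add_right ea u_def wedge_scaleR)
  qed
  finally have "e *\<^sub>R v1 = e *\<^sub>R vn + a *\<^sub>R (wedge u B + E)" .
  then have k: "(e\<^sup>2) *\<^sub>R u = e *\<^sub>R vn + a *\<^sub>R wedge (u - U) B"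
    by (simp add: vu wd power2_eq_square)
  show ?thesis unfolding U_def[symmetric] u_def[symmetric]
    using k by (simp add: algebra_simps)
qed


lemma A2:
  assumes e: "e > (0::real)" and B: "B \<noteq> 0"
    and v2: "v2 = vn + (c / e) *\<^sub>R F1 + (a / e) *\<^sub>R ((1 / e) *\<^sub>R wedge v2 B + E)"
  shows "a *\<^sub>R wedge ((1/e) *\<^sub>R v2 - (1 / B\<^sup>2) *\<^sub>R wedge E B) B - (e\<^sup>2) *\<^sub>R ((1/e) *\<^sub>R v2 - (1 / B\<^sup>2) *\<^sub>R wedge E B)
     = e\<^sup>2 *\<^sub>R ((1 / B\<^sup>2) *\<^sub>R wedge E B) - e *\<^sub>R vn - c *\<^sub>R F1"
proof -
  define U where "U = (1 / B\<^sup>2) *\<^sub>R wedge E B"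
  define u where "u = (1/e) *\<^sub>R v2"
  have vu: "v2 = e *\<^sub>R u" using e by (simp add: u_def)
  have wU: "wedge U B = - E" using B by (simp add: U_def wedge_drift)
  have wd: "wedge (u - U) B = wedge u B + E"
    using wedge_add[of u "-U" B] wedge_scaleR[of "-1" U B] wU by simp
  have "e *\<^sub>R v2 = e *\<^sub>R (vn + (c / e) *\<^sub>R F1 + (a / e) *\<^sub>R ((1 / e) *\<^sub>R wedge v2 B + E))"
    using v2 by simp
  also have "\<dots> = e *\<^sub>R vn + c *\<^sub>R F1 + a *\<^sub>R (wedge u B + E)"
  proof -
    have ea: "\<And>X a. e *\<^sub>R ((a / e) *\<^sub>R X) = a *\<^sub>R (X::real\<times>real)" using e by simp
    show ?thesis by (simp only: scaleR_add_right ea u_def wedge_scaleR)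
  qed
  finally have "e *\<^sub>R v2 = e *\<^sub>R vn + c *\<^sub>R F1 + a *\<^sub>R (wedge u B + E)" .
  then have k: "(e\<^sup>2) *\<^sub>R u = e *\<^sub>R vn + c *\<^sub>R F1 + a *\<^sub>R wedge (u - U) B"
    by (simp add: vu wd power2_eq_square)
  show ?thesis unfolding U_def[symmetric] u_def[symmetric]
    using k by (simp add: algebra_simps)
qed

lemma A3:
  assumes e: "e > (0::real)" and B: "B \<noteq> 0"
  shows "(1 / e) *\<^sub>R wedge v1 B + E = wedge ((1/e) *\<^sub>R v1 - (1 / B\<^sup>2) *\<^sub>R wedge E B) B"
proof -
  have wU: "wedge ((1 / B\<^sup>2) *\<^sub>R wedge E B) B = - E" using B by (simp add: wedge_drift)
  show ?thesis
    using wedge_add[of "(1/e) *\<^sub>R v1" "-((1 / B\<^sup>2) *\<^sub>R wedge E B)" B]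
      wedge_scaleR[of "-1" "(1 / B\<^sup>2) *\<^sub>R wedge E B" B] wU wedge_scaleR[of "1/e" v1 B] by simp
qed

lemma step_unfold:
  assumes "scheme_step E b e dt tn xn vn xn1 vn1"
  shows "\<exists>v1. v1 = vn + (gam*dt/e) *\<^sub>R ((1/e) *\<^sub>R wedge v1 (b tn xn) + E tn xn) \<and>
    vn1 = vn + ((1-gam)*dt/e) *\<^sub>R ((1/e) *\<^sub>R wedge v1 (b tn xn) + E tn xn)
       + (gam*dt/e) *\<^sub>R ((1/e) *\<^sub>R wedge vn1 (b (tn+dt/(2*gam)) (xn + (dt/(2*gam*e)) *\<^sub>R v1))
            + E (tn+dt/(2*gam)) (xn + (dt/(2*gam*e)) *\<^sub>R v1)) \<and>
    xn1 = xn + ((1-gam)*dt/e) *\<^sub>R v1 + (gam*dt/e) *\<^sub>R vn1"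
proof -
  from assms obtain x1 v1 F1 x2 v2 F2 where
    h: "v1 = vn + (gam * dt / e) *\<^sub>R F1"
       "F1 = (1 / e) *\<^sub>R wedge v1 (b tn xn) + E tn xn"
       "x2 = xn + ((1 - gam) * dt / e) *\<^sub>R v1 + (gam * dt / e) *\<^sub>R v2"
       "v2 = vn + ((1 - gam) * dt / e) *\<^sub>R F1 + (gam * dt / e) *\<^sub>R F2"
       "F2 = (1 / e) *\<^sub>R wedge v2 (b (tn + dt / (2 * gam)) (xn + (dt / (2 * gam * e)) *\<^sub>R v1))
          + E (tn + dt / (2 * gam)) (xn + (dt / (2 * gam * e)) *\<^sub>R v1)"
       "xn1 = x2" "vn1 = v2"
    unfolding scheme_step_def Let_def by (elim exE conjE) (rule that; assumption)
  have c1: "v1 = vn + (gam*dt/e) *\<^sub>R ((1/e) *\<^sub>R wedge v1 (b tn xn) + E tn xn)"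
    using h(1) unfolding h(2) .
  have c2: "vn1 = vn + ((1-gam)*dt/e) *\<^sub>R ((1/e) *\<^sub>R wedge v1 (b tn xn) + E tn xn)
       + (gam*dt/e) *\<^sub>R ((1/e) *\<^sub>R wedge vn1 (b (tn+dt/(2*gam)) (xn + (dt/(2*gam*e)) *\<^sub>R v1))
            + E (tn+dt/(2*gam)) (xn + (dt/(2*gam*e)) *\<^sub>R v1))"
    unfolding h(7) using h(4) unfolding h(2) h(5) .
  have c3: "xn1 = xn + ((1-gam)*dt/e) *\<^sub>R v1 + (gam*dt/e) *\<^sub>R vn1"
    unfolding h(6) h(7) by (rule h(3))
  show ?thesis using c1 c2 c3 by blast
qed

lemma ev_choice: "eventually (\<lambda>e. \<exists>v. Q e v) F \<Longrightarrow> \<exists>V. eventually (\<lambda>e. Q e (V e)) F"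
proof -
  assume h: "eventually (\<lambda>e. \<exists>v. Q e v) F"
  define V where "V e = (SOME v. Q e v)" for e
  have "eventually (\<lambda>e. Q e (V e)) F"
    using h by (rule eventually_mono) (unfold V_def, rule someI_ex)
  then show ?thesis by blast
qed

lemma eps_lim: "((\<lambda>e::real. e) \<longlongrightarrow> 0) (at_right 0)"
  by (rule tendsto_ident_at)

lemma step_lim:
  fixes E :: "real \<Rightarrow> real \<times> real \<Rightarrow> real \<times> real"
    and b :: "real \<Rightarrow> real \<times> real \<Rightarrow> real"
  assumes contE: "continuous_on ({0..} \<times> UNIV) (\<lambda>(t, z). E t z)"
    and contb: "continuous_on ({0..} \<times> UNIV) (\<lambda>(t, z). b t z)"
    and bnz: "\<forall>t\<ge>0. \<forall>z. b t z \<noteq> 0"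
    and dt: "dt > 0" and tn: "tn \<ge> 0"
    and X: "(xn \<longlongrightarrow> y) (at_right 0)" and W: "((\<lambda>e. e *\<^sub>R vn e) \<longlongrightarrow> 0) (at_right 0)"
    and S: "eventually (\<lambda>e. scheme_step E b e dt tn (xn e) (vn e) (xn1 e) (vn1 e)) (at_right 0)"
  shows "(xn1 \<longlongrightarrow> y + ((1-gam)*dt) *\<^sub>R drift E b tn y + (gam*dt) *\<^sub>R
            drift E b (tn + dt/(2*gam)) (y + (dt/(2*gam)) *\<^sub>R drift E b tn y)) (at_right 0)
     \<and> ((\<lambda>e. e *\<^sub>R vn1 e) \<longlongrightarrow> 0) (at_right 0)"
proof -
  let ?F = "at_right (0::real)"
  define a where "a = gam * dt"
  define c where "c = (1 - gam) * dt"
  define th where "th = tn + dt/(2*gam)"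
  have a: "a > 0" using gam_pos dt by (simp add: a_def)
  have th: "th \<ge> 0" using gam_pos dt tn by (simp add: th_def)
  have epos: "eventually (\<lambda>e. e > 0) ?F" by (rule eventually_at_right_less)
  have "eventually (\<lambda>e. \<exists>v1. v1 = vn e + (a/e) *\<^sub>R ((1/e) *\<^sub>R wedge v1 (b tn (xn e)) + E tn (xn e)) \<and>
    vn1 e = vn e + (c/e) *\<^sub>R ((1/e) *\<^sub>R wedge v1 (b tn (xn e)) + E tn (xn e))
       + (a/e) *\<^sub>R ((1/e) *\<^sub>R wedge (vn1 e) (b th (xn e + (dt/(2*gam*e)) *\<^sub>R v1))
            + E th (xn e + (dt/(2*gam*e)) *\<^sub>R v1)) \<and>
    xn1 e = xn e + (c/e) *\<^sub>R v1 + (a/e) *\<^sub>R vn1 e) ?F"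
    using S by (rule eventually_mono) (unfold a_def c_def th_def, rule step_unfold)
  from ev_choice[OF this] obtain V1 where EV: "eventually (\<lambda>e. V1 e = vn e + (a/e) *\<^sub>R ((1/e) *\<^sub>R wedge (V1 e) (b tn (xn e)) + E tn (xn e)) \<and>
    vn1 e = vn e + (c/e) *\<^sub>R ((1/e) *\<^sub>R wedge (V1 e) (b tn (xn e)) + E tn (xn e))
       + (a/e) *\<^sub>R ((1/e) *\<^sub>R wedge (vn1 e) (b th (xn e + (dt/(2*gam*e)) *\<^sub>R V1 e))
            + E th (xn e + (dt/(2*gam*e)) *\<^sub>R V1 e)) \<and>
    xn1 e = xn e + (c/e) *\<^sub>R V1 e + (a/e) *\<^sub>R vn1 e) ?F"
    by blast
  have EV1: "eventually (\<lambda>e. V1 e = vn e + (a/e) *\<^sub>R ((1/e) *\<^sub>R wedge (V1 e) (b tn (xn e)) + E tn (xn e))) ?F"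
    using EV by (rule eventually_mono) (rule conjunct1)
  have EV2: "eventually (\<lambda>e. vn1 e = vn e + (c/e) *\<^sub>R ((1/e) *\<^sub>R wedge (V1 e) (b tn (xn e)) + E tn (xn e))
       + (a/e) *\<^sub>R ((1/e) *\<^sub>R wedge (vn1 e) (b th (xn e + (dt/(2*gam*e)) *\<^sub>R V1 e))
            + E th (xn e + (dt/(2*gam*e)) *\<^sub>R V1 e))) ?F"
    using EV by (rule eventually_mono) (drule conjunct2, erule conjunct1)
  have EV3: "eventually (\<lambda>e. xn1 e = xn e + (c/e) *\<^sub>R V1 e + (a/e) *\<^sub>R vn1 e) ?F"
    using EV by (rule eventually_mono) (drule conjunct2, erule conjunct2)
  define U0 where "U0 e = drift E b tn (xn e)" for e
  define u1 where "u1 e = (1/e) *\<^sub>R V1 e" for e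
  define d where "d e = u1 e - U0 e" for e
  have bnz0: "b tn y \<noteq> 0" using bnz tn by blast
  have U0lim: "(U0 \<longlongrightarrow> drift E b tn y) ?F"
    unfolding U0_def by (rule drift_lim[OF contE contb tn bnz0 X])
  have B0lim: "((\<lambda>e. b tn (xn e)) \<longlongrightarrow> b tn y) ?F" by (rule cont_lim[OF contb tn X])
  have e2: "((\<lambda>e::real. e\<^sup>2) \<longlongrightarrow> 0) ?F"
    using tendsto_power[OF eps_lim, of 2] by simp
  have eqd: "eventually (\<lambda>e. a *\<^sub>R wedge (d e) (b tn (xn e)) - (e\<^sup>2) *\<^sub>R d e = e\<^sup>2 *\<^sub>R U0 e - e *\<^sub>R vn e) ?F"
    using EV1 epos
  proof eventually_elim
    case (elim e)
    show ?case unfolding d_def u1_def U0_def drift_def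
      by (rule A1[OF elim(2)]) (use bnz tn elim(1) in blast)+
  qed
  have r1: "((\<lambda>e. e\<^sup>2 *\<^sub>R U0 e - e *\<^sub>R vn e) \<longlongrightarrow> 0) ?F"
    using tendsto_diff[OF tendsto_scaleR[OF e2 U0lim] W] by simp
  have dlim: "(d \<longlongrightarrow> 0) ?F" by (rule solve0[OF r1 B0lim bnz0 a eqd])
  have u1lim: "(u1 \<longlongrightarrow> drift E b tn y) ?F"
  proof -
    have "((\<lambda>e. d e + U0 e) \<longlongrightarrow> 0 + drift E b tn y) ?F" by (intro tendsto_intros dlim U0lim)
    then show ?thesis by (simp add: d_def)
  qed
  define yh where "yh = y + (dt/(2*gam)) *\<^sub>R drift E b tn y"
  define xh where "xh e = xn e + (dt/(2*gam)) *\<^sub>R u1 e" for e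
  have xhlim: "(xh \<longlongrightarrow> yh) ?F" unfolding xh_def yh_def by (intro tendsto_intros X u1lim)
  have xh_eq: "eventually (\<lambda>e. xn e + (dt/(2*gam*e)) *\<^sub>R V1 e = xh e) ?F"
    using epos by eventually_elim (simp add: xh_def u1_def)
  have bnz1: "b th yh \<noteq> 0" using bnz th by blast
  define U1 where "U1 e = drift E b th (xh e)" for e
  have U1lim: "(U1 \<longlongrightarrow> drift E b th yh) ?F"
    unfolding U1_def by (rule drift_lim[OF contE contb th bnz1 xhlim])
  have B1lim: "((\<lambda>e. b th (xh e)) \<longlongrightarrow> b th yh) ?F" by (rule cont_lim[OF contb th xhlim])
  define F1 where "F1 e = (1/e) *\<^sub>R wedge (V1 e) (b tn (xn e)) + E tn (xn e)" for e
  have F1eq: "eventually (\<lambda>e. wedge (d e) (b tn (xn e)) = F1 e) ?F"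
    using epos
  proof eventually_elim
    case (elim e)
    show ?case unfolding d_def u1_def U0_def drift_def F1_def
      by (rule A3[symmetric]) (use bnz tn elim(1) in blast)+
  qed
  have F1lim: "(F1 \<longlongrightarrow> 0) ?F"
  proof -
    have "((\<lambda>e. wedge (d e) (b tn (xn e))) \<longlongrightarrow> wedge 0 (b tn y)) ?F" by (intro tendsto_wedge dlim B0lim)
    then show ?thesis using F1eq by (simp add: Lim_transform_eventually)
  qed
  define u2 where "u2 e = (1/e) *\<^sub>R vn1 e" for e
  define d2 where "d2 e = u2 e - U1 e" for e
  have eqd2: "eventually (\<lambda>e. a *\<^sub>R wedge (d2 e) (b th (xh e)) - (e\<^sup>2) *\<^sub>R d2 e = e\<^sup>2 *\<^sub>R U1 e - e *\<^sub>R vn e - c *\<^sub>R F1 e) ?F"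
    using EV2 epos xh_eq
  proof eventually_elim
    case (elim e)
    have v2: "vn1 e = vn e + (c/e) *\<^sub>R F1 e + (a/e) *\<^sub>R ((1/e) *\<^sub>R wedge (vn1 e) (b th (xh e)) + E th (xh e))"
      unfolding F1_def elim(3)[symmetric] by (rule elim(1))
    show ?case unfolding d2_def u2_def U1_def drift_def
      by (rule A2[OF _ _ v2]) (use bnz th elim(2) in blast)+
  qed
  have r2: "((\<lambda>e. e\<^sup>2 *\<^sub>R U1 e - e *\<^sub>R vn e - c *\<^sub>R F1 e) \<longlongrightarrow> 0) ?F"
    using tendsto_diff[OF tendsto_diff[OF tendsto_scaleR[OF e2 U1lim] W] tendsto_scaleR[OF tendsto_const F1lim]] by simp
  have d2lim: "(d2 \<longlongrightarrow> 0) ?F" by (rule solve0[OF r2 B1lim bnz1 a eqd2])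
  have u2lim: "(u2 \<longlongrightarrow> drift E b th yh) ?F"
  proof -
    have "((\<lambda>e. d2 e + U1 e) \<longlongrightarrow> 0 + drift E b th yh) ?F" by (intro tendsto_intros d2lim U1lim)
    then show ?thesis by (simp add: d2_def)
  qed
  have xeq: "eventually (\<lambda>e. xn e + c *\<^sub>R u1 e + a *\<^sub>R u2 e = xn1 e) ?F"
    using EV3 epos by eventually_elim (simp add: u1_def u2_def)
  have veq: "eventually (\<lambda>e. e\<^sup>2 *\<^sub>R u2 e = e *\<^sub>R vn1 e) ?F"
    using epos by eventually_elim (simp add: u2_def power2_eq_square)
  have "((\<lambda>e. xn e + c *\<^sub>R u1 e + a *\<^sub>R u2 e) \<longlongrightarrow> y + c *\<^sub>R drift E b tn y + a *\<^sub>R drift E b th yh) ?F"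
    by (intro tendsto_intros X u1lim u2lim)
  then have 1: "(xn1 \<longlongrightarrow> y + c *\<^sub>R drift E b tn y + a *\<^sub>R drift E b th yh) ?F"
    using xeq by (rule Lim_transform_eventually)
  have "((\<lambda>e. e\<^sup>2 *\<^sub>R u2 e) \<longlongrightarrow> 0 *\<^sub>R drift E b th yh) ?F"
    by (intro tendsto_intros e2 u2lim)
  then have 2: "((\<lambda>e. e *\<^sub>R vn1 e) \<longlongrightarrow> 0) ?F"
    using veq by (simp add: Lim_transform_eventually)
  show ?thesis using 1 2 by (simp add: a_def c_def th_def yh_def)
qed


theorem proposition3p3:
  fixes E :: "real \<Rightarrow> real \<times> real \<Rightarrow> real \<times> real"
    and b :: "real \<Rightarrow> real \<times> real \<Rightarrow> real"
    and dt T :: real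
    and x v :: "real \<Rightarrow> nat \<Rightarrow> real \<times> real"
    and y0 :: "real \<times> real"
  assumes contE: "continuous_on ({0..} \<times> UNIV) (\<lambda>(t, z). E t z)"
    and contb: "continuous_on ({0..} \<times> UNIV) (\<lambda>(t, z). b t z)"
    and bnz: "\<forall>t\<ge>0. \<forall>z. b t z \<noteq> 0"
    and dt_pos: "dt > 0" and T_pos: "T > 0"
    and scheme: "\<forall>eps>0. \<forall>n < nat \<lfloor>T / dt\<rfloor>.
        scheme_step E b eps dt (real n * dt) (x eps n) (v eps n) (x eps (Suc n)) (v eps (Suc n))"
    and bdd: "\<forall>n\<in>{1..nat \<lfloor>T / dt\<rfloor>}. \<exists>C. \<forall>eps>0.
        norm (x eps n) \<le> C \<and> norm (eps *\<^sub>R v eps n) \<le> C"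
    and init_x: "((\<lambda>eps. x eps 0) \<longlongrightarrow> y0) (at_right 0)"
    and init_v: "((\<lambda>eps. eps *\<^sub>R v eps 0) \<longlongrightarrow> 0) (at_right 0)"
  shows "\<forall>n \<le> nat \<lfloor>T / dt\<rfloor>. ((\<lambda>eps. x eps n) \<longlongrightarrow> ylim E b dt y0 n) (at_right 0)"
proof -
  have main: "n \<le> nat \<lfloor>T / dt\<rfloor> \<Longrightarrow> ((\<lambda>eps. x eps n) \<longlongrightarrow> ylim E b dt y0 n) (at_right 0)
      \<and> ((\<lambda>eps. eps *\<^sub>R v eps n) \<longlongrightarrow> 0) (at_right 0)" for n
  proof (induction n)
    case 0
    then show ?case using init_x init_v by simp
  next
    case (Suc n)
    then have lt: "n < nat \<lfloor>T / dt\<rfloor>" by simp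
    with Suc.IH have IH: "((\<lambda>eps. x eps n) \<longlongrightarrow> ylim E b dt y0 n) (at_right 0)"
        "((\<lambda>eps. eps *\<^sub>R v eps n) \<longlongrightarrow> 0) (at_right 0)" by auto
    have S: "eventually (\<lambda>e. scheme_step E b e dt (real n * dt) (x e n) (v e n) (x e (Suc n)) (v e (Suc n))) (at_right 0)"
      using eventually_at_right_less[of "0::real"] by (rule eventually_mono) (use scheme lt in blast)
    have tn: "real n * dt \<ge> 0" using dt_pos by simp
    show ?case
      using step_lim[OF contE contb bnz dt_pos tn IH S] by (simp add: Let_def)
  qed
  show ?thesis using main by blast
qed

end
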